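(* Let $1\le r<N$, $r\le m$, and assume $\widehat\lambda_r>0$. Write $\epsilon=\|L_N-L_m\|_{HS}$ and suppose $$\Delta:=\frac{\lambda_r-\lambda_{r+1}}{N}>3\epsilon.$$ Then $$\|\Delta H\|_2\le\frac{4\epsilon}{\Delta-\epsilon}\le\frac{6\epsilon}{\Delta}.$$
   Context: Let $\mathcal X$ be a set and $\kappa:\mathcal X\times\mathcal X\to\mathbb R$ a positive semidefinite kernel with $\kappa(\mathbf x,\mathbf x)\le1$. Let $\mathcal H_\kappa$ be its RKHS, with inner product $\langle\cdot,\cdot\rangle$. Let $\mathcal D=\{\mathbf x_1,\ldots,\mathbf x_N\}$ and $K=[\kappa(\mathbf x_i,\mathbf x_j)]_{N\times N}$. Assume $K$ is positive definite, with eigenvalues $\lambda_1\ge\cdots\ge\lambda_N>0$ and orthonormal eigenvectors $\mathbf v_i$. Put $V_{i,j}=[(\mathbf v_1,\ldots,\mathbf v_N)]_{i,j}$. Let $\widehat{\mathbf x}_1,\ldots,\widehat{\mathbf x}_m$ be sampled uniformly from $\mathcal D$. Let $\widehat K=[\kappa(\widehat{\mathbf x}_i,\widehat{\mathbf x}_j)]_{m\times m}$, with eigenvalues $\widehat\lambda_1\ge\cdots\ge\widehat\lambda_m$ and orthonormal eigenvectors $\mathbf u_i$. Put $U_{i,j}=[(\mathbf u_1,\ldots,\mathbf u_r)]_{i,j}$. Define the operators $$L_N[f]=\frac1N\sum_{i=1}^N\kappa(\mathbf x_i,\cdot)f(\mathbf x_i),\qquad L_m[f]=\frac1m\sum_{i=1}^m\kappa(\widehat{\mathbf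 x}_i,\cdot)f(\widehat{\mathbf x}_i).$$ Define $$\varphi_j=\lambda_j^{-1/2}\sum_{i=1}^N V_{i,j}\kappa(\mathbf x_i,\cdot)\quad(j\in[N]),\qquad \widehat\varphi_j=\widehat\lambda_j^{-1/2}\sum_{i=1}^m U_{i,j}\kappa(\widehat{\mathbf x}_i,\cdot)\quad(j\le r).$$ Define $\|L\|_{HS}=\big(\sum_{i,j=1}^N\langle\varphi_i,L\varphi_j\rangle^2\big)^{1/2}$. Define $H_r[f]=\sum_{i=1}^r\varphi_i\langle\varphi_i,f\rangle$, $\widehat H_r[f]=\sum_{i=1}^r\widehat\varphi_i\langle\widehat\varphi_i,f\rangle$, and $\Delta H=H_r-\widehat H_r$. Here $\|\cdot\|_2$ is the operator norm on $\mathcal H_\kappa$. *)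

theory Defs
  imports "HOL-Analysis.Analysis"
begin

text \<open>The RKHS is modelled by a real Hilbert space 'h together with a feature map
  Phi with dense span; a function f in the RKHS corresponds to h with f(x) = Phi x \<bullet> h,
  and kappa(x,.) corresponds to Phi x.  Points are indexed 1..n.\<close>

definition emp_op :: "('x \<Rightarrow> 'h::real_inner) \<Rightarrow> nat \<Rightarrow> (nat \<Rightarrow> 'x) \<Rightarrow> 'h \<Rightarrow> 'h" where
  "emp_op Phi n p h = (1 / real n) *\<^sub>R (\<Sum>i=1..n. (Phi (p i) \<bullet> h) *\<^sub>R Phi (p i))"

definition eigen_decomp :: "nat \<Rightarrow> (nat \<Rightarrow> nat \<Rightarrow> real) \<Rightarrow> (nat \<Rightarrow> real) \<Rightarrow> (nat \<Rightarrow> nat \<Rightarrow> real) \<Rightarrow> bool" where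
  "eigen_decomp n M lam W \<longleftrightarrow>
     (\<forall>j\<in>{1..n}. \<forall>l\<in>{1..n}. (\<Sum>i=1..n. W i j * W i l) = (if j = l then 1 else 0)) \<and>
     (\<forall>j\<in>{1..n}. \<forall>i\<in>{1..n}. (\<Sum>k=1..n. M i k * W k j) = lam j * W i j) \<and>
     (\<forall>i j. 1 \<le> i \<longrightarrow> i \<le> j \<longrightarrow> j \<le> n \<longrightarrow> lam j \<le> lam i)"

definition eigfun :: "('x \<Rightarrow> 'h::real_inner) \<Rightarrow> nat \<Rightarrow> (nat \<Rightarrow> 'x) \<Rightarrow> (nat \<Rightarrow> real) \<Rightarrow> (nat \<Rightarrow> nat \<Rightarrow> real) \<Rightarrow> nat \<Rightarrow> 'h" where
  "eigfun Phi n p lam W j = (1 / sqrt (lam j)) *\<^sub>R (\<Sum>i=1..n. W i j *\<^sub>R Phi (p i))"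

definition proj_op :: "(nat \<Rightarrow> 'h::real_inner) \<Rightarrow> nat \<Rightarrow> 'h \<Rightarrow> 'h" where
  "proj_op phi r h = (\<Sum>i=1..r. (phi i \<bullet> h) *\<^sub>R phi i)"

definition hs_norm :: "(nat \<Rightarrow> 'h::real_inner) \<Rightarrow> nat \<Rightarrow> ('h \<Rightarrow> 'h) \<Rightarrow> real" where
  "hs_norm phi n L = sqrt (\<Sum>i=1..n. \<Sum>j=1..n. (phi i \<bullet> L (phi j))\<^sup>2)"

end

theory Submission
  imports Defs
begin

definition ON :: "(nat \<Rightarrow> 'h::real_inner) \<Rightarrow> nat set \<Rightarrow> bool" where
  "ON e I \<longleftrightarrow> (\<forall>i\<in>I. \<forall>j\<in>I. e i \<bullet> e j = (if i = j then 1 else 0))"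

lemma sum3_swap: "(\<Sum>k\<in>A. \<Sum>i\<in>B. \<Sum>j\<in>C. f k i j) = (\<Sum>i\<in>B. \<Sum>j\<in>C. \<Sum>k\<in>A. (f k i j::'a::comm_monoid_add))"
proof -
  have "(\<Sum>k\<in>A. \<Sum>i\<in>B. \<Sum>j\<in>C. f k i j) = (\<Sum>i\<in>B. \<Sum>k\<in>A. \<Sum>j\<in>C. f k i j)"
    by (rule sum.swap)
  also have "\<dots> = (\<Sum>i\<in>B. \<Sum>j\<in>C. \<Sum>k\<in>A. f k i j)"
    by (rule sum.cong[OF refl], rule sum.swap)
  finally show ?thesis .
qed

lemma CS_sqrt:
  fixes a b :: "nat \<Rightarrow> real"
  shows "(\<Sum>i\<in>I. a i * b i) \<le> sqrt (\<Sum>i\<in>I. (a i)\<^sup>2) * sqrt (\<Sum>i\<in>I. (b i)\<^sup>2)"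
proof -
  have "(\<Sum>i\<in>I. a i * b i) \<le> \<bar>\<Sum>i\<in>I. a i * b i\<bar>" by simp
  also have "\<dots> = sqrt ((\<Sum>i\<in>I. a i * b i)\<^sup>2)" by simp
  also have "\<dots> \<le> sqrt ((\<Sum>i\<in>I. (a i)\<^sup>2) * (\<Sum>i\<in>I. (b i)\<^sup>2))"
    by (rule real_sqrt_le_mono[OF Cauchy_Schwarz_ineq_sum])
  also have "\<dots> = sqrt (\<Sum>i\<in>I. (a i)\<^sup>2) * sqrt (\<Sum>i\<in>I. (b i)\<^sup>2)" by (simp add: real_sqrt_mult)
  finally show ?thesis .
qed

lemma ON_inner_sums:
  assumes "ON e I" "finite I"
  shows "(\<Sum>i\<in>I. c i *\<^sub>R e i) \<bullet> (\<Sum>j\<in>I. d j *\<^sub>R e j) = (\<Sum>i\<in>I. c i * d i)"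
proof -
  have "(\<Sum>i\<in>I. c i *\<^sub>R e i) \<bullet> (\<Sum>j\<in>I. d j *\<^sub>R e j) = (\<Sum>i\<in>I. \<Sum>j\<in>I. c i * d j * (e i \<bullet> e j))"
    unfolding inner_sum_left by (simp add: inner_sum_right sum_distrib_left mult_ac)
  also have "\<dots> = (\<Sum>i\<in>I. \<Sum>j\<in>I. if i = j then c i * d i else 0)"
    using assms(1) unfolding ON_def by (intro sum.cong refl) auto
  also have "\<dots> = (\<Sum>i\<in>I. c i * d i)" using assms(2) by simp
  finally show ?thesis .
qed

lemma ON_norm_sum:
  assumes "ON e I" "finite I"
  shows "(norm (\<Sum>i\<in>I. c i *\<^sub>R e i))\<^sup>2 = (\<Sum>i\<in>I. (c i)\<^sup>2)"
  unfolding power2_norm_eq_inner using ON_inner_sums[OF assms, of c c] by (simp add: power2_eq_square)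

lemma ON_pyth:
  assumes "ON e I" "finite I"
  shows "(norm (h - (\<Sum>i\<in>I. (e i \<bullet> h) *\<^sub>R e i)))\<^sup>2 = (norm h)\<^sup>2 - (\<Sum>i\<in>I. (e i \<bullet> h)\<^sup>2)"
proof -
  let ?S = "\<Sum>i\<in>I. (e i \<bullet> h) *\<^sub>R e i"
  have SS: "?S \<bullet> ?S = (\<Sum>i\<in>I. (e i \<bullet> h)\<^sup>2)"
    using ON_inner_sums[OF assms, of "\<lambda>i. e i \<bullet> h" "\<lambda>i. e i \<bullet> h"] by (simp add: power2_eq_square)
  have Sh: "?S \<bullet> h = (\<Sum>i\<in>I. (e i \<bullet> h)\<^sup>2)"
    by (simp add: inner_sum_left power2_eq_square)
  have "(norm (h - ?S))\<^sup>2 = h \<bullet> h - 2 * (?S \<bullet> h) + ?S \<bullet> ?S"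
    by (simp add: power2_norm_eq_inner inner_diff_left inner_diff_right inner_commute)
  thus ?thesis using SS Sh by (simp add: power2_norm_eq_inner)
qed

lemma ON_bessel:
  assumes "ON e I" "finite I"
  shows "(\<Sum>i\<in>I. (e i \<bullet> h)\<^sup>2) \<le> (norm h)\<^sup>2"
  using ON_pyth[OF assms, of h] by (metis diff_ge_0_iff_ge zero_le_power2)

lemma ON_parseval_vec:
  assumes "ON e I" "finite I" "u \<in> span (e ` I)"
  shows "u = (\<Sum>i\<in>I. (e i \<bullet> u) *\<^sub>R e i)"
proof -
  have "subspace {u. u = (\<Sum>i\<in>I. (e i \<bullet> u) *\<^sub>R e i)}"
    unfolding subspace_def
  proof (intro conjI ballI allI; simp only: mem_Collect_eq)
    fix x y assume x: "x = (\<Sum>i\<in>I. (e i \<bullet> x) *\<^sub>R e i)" and y: "y = (\<Sum>i\<in>I. (e i \<bullet> y) *\<^sub>R e i)"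
    have "(\<Sum>i\<in>I. (e i \<bullet> (x + y)) *\<^sub>R e i) = (\<Sum>i\<in>I. (e i \<bullet> x) *\<^sub>R e i) + (\<Sum>i\<in>I. (e i \<bullet> y) *\<^sub>R e i)"
      by (simp add: inner_add_right scaleR_add_left sum.distrib)
    thus "x + y = (\<Sum>i\<in>I. (e i \<bullet> (x + y)) *\<^sub>R e i)" using x y by simp
  next
    fix c x assume x: "x = (\<Sum>i\<in>I. (e i \<bullet> x) *\<^sub>R e i)"
    have "(\<Sum>i\<in>I. (e i \<bullet> (c *\<^sub>R x)) *\<^sub>R e i) = c *\<^sub>R (\<Sum>i\<in>I. (e i \<bullet> x) *\<^sub>R e i)"
      by (simp add: scaleR_sum_right)
    thus "c *\<^sub>R x = (\<Sum>i\<in>I. (e i \<bullet> (c *\<^sub>R x)) *\<^sub>R e i)" using x by simp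
  qed simp
  moreover have "v = (\<Sum>i\<in>I. (e i \<bullet> v) *\<^sub>R e i)" if "v \<in> e ` I" for v
  proof -
    from that obtain j where j: "j \<in> I" "v = e j" by auto
    have "(\<Sum>i\<in>I. (e i \<bullet> e j) *\<^sub>R e i) = (\<Sum>i\<in>I. if i = j then e i else 0)"
      using assms(1) j(1) unfolding ON_def by (intro sum.cong) auto
    also have "\<dots> = e j" using assms(2) j(1) by simp
    finally show ?thesis using j by simp
  qed
  ultimately show ?thesis using span_induct[OF assms(3)] by blast
qed

lemma ON_parseval:
  assumes "ON e I" "finite I" "u \<in> span (e ` I)"
  shows "(norm u)\<^sup>2 = (\<Sum>i\<in>I. (e i \<bullet> u)\<^sup>2)"
  using ON_norm_sum[OF assms(1,2), of "\<lambda>i. e i \<bullet> u"] ON_parseval_vec[OF assms] by simp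

lemma rows_orth:
  fixes W :: "nat \<Rightarrow> nat \<Rightarrow> real"
  assumes col: "\<forall>j\<in>{1..n}. \<forall>l\<in>{1..n}. (\<Sum>i=1..n. W i j * W i l) = (if j = l then 1 else 0)"
    and ij: "i \<in> {1..n}" "j \<in> {1..n}"
  shows "(\<Sum>k=1..n. W i k * W j k) = (if i = j then 1 else 0)"
proof -
  let ?I = "{1..n::nat}"
  define S where "S = (\<lambda>i j. \<Sum>k\<in>?I. W i k * W j k)"
  define D where "D = (\<lambda>i j::nat. if i = j then 1 else (0::real))"
  have C: "\<And>k l. k \<in> ?I \<Longrightarrow> l \<in> ?I \<Longrightarrow> (\<Sum>i\<in>?I. W i k * W i l) = D k l"
    using col unfolding D_def by blast
  have SS: "(\<Sum>i\<in>?I. \<Sum>j\<in>?I. (S i j)\<^sup>2) = real n"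
  proof -
    have "(\<Sum>i\<in>?I. \<Sum>j\<in>?I. (S i j)\<^sup>2) = (\<Sum>i\<in>?I. \<Sum>j\<in>?I. \<Sum>k\<in>?I. \<Sum>l\<in>?I. (W i k * W i l) * (W j k * W j l))"
      unfolding S_def power2_eq_square sum_product by (simp add: mult_ac)
    also have "\<dots> = (\<Sum>i\<in>?I. \<Sum>k\<in>?I. \<Sum>j\<in>?I. \<Sum>l\<in>?I. (W i k * W i l) * (W j k * W j l))"
      by (rule sum.cong[OF refl], rule sum.swap)
    also have "\<dots> = (\<Sum>i\<in>?I. \<Sum>k\<in>?I. \<Sum>l\<in>?I. \<Sum>j\<in>?I. (W i k * W i l) * (W j k * W j l))"
      by (rule sum.cong[OF refl], rule sum.cong[OF refl], rule sum.swap)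
    also have "\<dots> = (\<Sum>k\<in>?I. \<Sum>i\<in>?I. \<Sum>l\<in>?I. \<Sum>j\<in>?I. (W i k * W i l) * (W j k * W j l))"
      by (rule sum.swap)
    also have "\<dots> = (\<Sum>k\<in>?I. \<Sum>l\<in>?I. \<Sum>i\<in>?I. \<Sum>j\<in>?I. (W i k * W i l) * (W j k * W j l))"
      by (rule sum.cong[OF refl], rule sum.swap)
    also have "\<dots> = (\<Sum>k\<in>?I. \<Sum>l\<in>?I. (\<Sum>i\<in>?I. W i k * W i l) * (\<Sum>j\<in>?I. W j k * W j l))"
      by (simp add: sum_product)
    also have "\<dots> = (\<Sum>k\<in>?I. \<Sum>l\<in>?I. D k l * D k l)"
      using C by (intro sum.cong refl) simp
    also have "\<dots> = real n" unfolding D_def by (simp add: if_distrib cong: if_cong)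
    finally show ?thesis .
  qed
  have Str: "(\<Sum>i\<in>?I. S i i) = real n"
  proof -
    have "(\<Sum>i\<in>?I. S i i) = (\<Sum>k\<in>?I. \<Sum>i\<in>?I. W i k * W i k)"
      unfolding S_def by (rule sum.swap)
    also have "\<dots> = (\<Sum>k\<in>?I. D k k)" using C by (intro sum.cong refl) simp
    also have "\<dots> = real n" unfolding D_def by simp
    finally show ?thesis .
  qed
  have "(\<Sum>i\<in>?I. \<Sum>j\<in>?I. (S i j - D i j)\<^sup>2) = (\<Sum>i\<in>?I. \<Sum>j\<in>?I. (S i j)\<^sup>2) - 2 * (\<Sum>i\<in>?I. \<Sum>j\<in>?I. S i j * D i j) + (\<Sum>i\<in>?I. \<Sum>j\<in>?I. (D i j)\<^sup>2)"
    by (simp add: power2_diff sum_subtractf sum.distrib sum_distrib_left mult.assoc)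
  also have "(\<Sum>i\<in>?I. \<Sum>j\<in>?I. S i j * D i j) = (\<Sum>i\<in>?I. S i i)"
    unfolding D_def by (simp add: if_distrib cong: if_cong)
  also have "(\<Sum>i\<in>?I. \<Sum>j\<in>?I. (D i j)\<^sup>2) = real n"
  proof -
    have "\<And>i j. (D i j)\<^sup>2 = D i j" unfolding D_def by simp
    thus ?thesis by (simp add: D_def)
  qed
  finally have "(\<Sum>i\<in>?I. \<Sum>j\<in>?I. (S i j - D i j)\<^sup>2) = 0" using SS Str by simp
  hence "\<forall>i\<in>?I. (\<Sum>j\<in>?I. (S i j - D i j)\<^sup>2) = 0"
    by (subst (asm) sum_nonneg_eq_0_iff) (auto intro: sum_nonneg)
  hence "(S i j - D i j)\<^sup>2 = 0" using ij by (simp add: sum_nonneg_eq_0_iff)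
  thus ?thesis unfolding S_def D_def by simp
qed

definition wv :: "('x \<Rightarrow> 'h::real_inner) \<Rightarrow> nat \<Rightarrow> (nat \<Rightarrow> 'x) \<Rightarrow> (nat \<Rightarrow> nat \<Rightarrow> real) \<Rightarrow> nat \<Rightarrow> 'h" where
  "wv Phi n p W k = (\<Sum>i=1..n. W i k *\<^sub>R Phi (p i))"

context
  fixes Phi :: "'x \<Rightarrow> 'h::real_inner" and n :: nat and p :: "nat \<Rightarrow> 'x"
    and lam :: "nat \<Rightarrow> real" and W :: "nat \<Rightarrow> nat \<Rightarrow> real"
  assumes ed: "eigen_decomp n (\<lambda>i j. Phi (p i) \<bullet> Phi (p j)) lam W"
begin

lemma ed_col: "j \<in> {1..n} \<Longrightarrow> l \<in> {1..n} \<Longrightarrow> (\<Sum>i=1..n. W i j * W i l) = (if j = l then 1 else 0)"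
  using ed unfolding eigen_decomp_def by blast

lemma ed_eig: "j \<in> {1..n} \<Longrightarrow> i \<in> {1..n} \<Longrightarrow> (\<Sum>k=1..n. (Phi (p i) \<bullet> Phi (p k)) * W k j) = lam j * W i j"
  using ed unfolding eigen_decomp_def by blast

lemma ed_mono: "1 \<le> i \<Longrightarrow> i \<le> j \<Longrightarrow> j \<le> n \<Longrightarrow> lam j \<le> lam i"
  using ed unfolding eigen_decomp_def by blast

lemma ed_rows: "i \<in> {1..n} \<Longrightarrow> j \<in> {1..n} \<Longrightarrow> (\<Sum>k=1..n. W i k * W j k) = (if i = j then 1 else 0)"
  using rows_orth[of n W i j] ed_col by blast

lemma wv_inner: 
  assumes k: "k \<in> {1..n}" and l: "l \<in> {1..n}"
  shows "wv Phi n p W k \<bullet> wv Phi n p W l = (if k = l then lam k else 0)"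
proof -
  have "wv Phi n p W k \<bullet> wv Phi n p W l = (\<Sum>i=1..n. W i k * (\<Sum>j=1..n. (Phi (p i) \<bullet> Phi (p j)) * W j l))"
    unfolding wv_def inner_sum_left by (simp add: inner_sum_right sum_distrib_left mult_ac)
  also have "\<dots> = (\<Sum>i=1..n. W i k * (lam l * W i l))"
    using ed_eig[OF l] by (intro sum.cong refl) simp
  also have "\<dots> = lam l * (\<Sum>i=1..n. W i k * W i l)"
    by (simp add: sum_distrib_left mult_ac)
  also have "\<dots> = (if k = l then lam k else 0)" using ed_col[OF k l] by simp
  finally show ?thesis .
qed

lemma lam_nonneg: "k \<in> {1..n} \<Longrightarrow> lam k \<ge> 0"
  using wv_inner[of k k] by (metis inner_ge_zero)

lemma wv_eq: 
  assumes k: "k \<in> {1..n}"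
  shows "wv Phi n p W k = sqrt (lam k) *\<^sub>R eigfun Phi n p lam W k"
proof (cases "lam k = 0")
  case True
  hence "wv Phi n p W k \<bullet> wv Phi n p W k = 0" using wv_inner[OF k k] by simp
  thus ?thesis using True by simp
next
  case False
  hence "sqrt (lam k) > 0" using lam_nonneg[OF k] by simp
  thus ?thesis unfolding eigfun_def wv_def[symmetric] by simp
qed

lemma eigfun_zero: "lam k = 0 \<Longrightarrow> eigfun Phi n p lam W k = 0"
  unfolding eigfun_def by simp

lemma eigfun_ON: "ON (eigfun Phi n p lam W) {k\<in>{1..n}. lam k > 0}"
  unfolding ON_def
proof (intro ballI)
  fix k l assume k: "k \<in> {k\<in>{1..n}. lam k > 0}" and l: "l \<in> {k\<in>{1..n}. lam k > 0}"
  have "eigfun Phi n p lam W k \<bullet> eigfun Phi n p lam W l = (wv Phi n p W k \<bullet> wv Phi n p W l) / (sqrt (lam k) * sqrt (lam l))"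
    unfolding eigfun_def wv_def[symmetric] by simp
  thus "eigfun Phi n p lam W k \<bullet> eigfun Phi n p lam W l = (if k = l then 1 else 0)"
    using wv_inner[of k l] k l by (simp add: real_sqrt_mult[symmetric] del: real_sqrt_mult)
qed

lemma Phi_expand:
  assumes l: "l \<in> {1..n}"
  shows "Phi (p l) = (\<Sum>k=1..n. W l k *\<^sub>R wv Phi n p W k)"
proof -
  have "(\<Sum>k=1..n. W l k *\<^sub>R wv Phi n p W k) = (\<Sum>i=1..n. (\<Sum>k=1..n. W l k * W i k) *\<^sub>R Phi (p i))"
    unfolding wv_def scaleR_sum_right by (simp add: scaleR_sum_left, rule sum.swap)
  also have "\<dots> = (\<Sum>i=1..n. (if l = i then Phi (p i) else 0))"
    using ed_rows[OF l] by (intro sum.cong refl) simp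
  also have "\<dots> = Phi (p l)" using l by simp
  finally show ?thesis by simp
qed

lemma Phi_in_span:
  assumes l: "l \<in> {1..n}"
  shows "Phi (p l) \<in> span (eigfun Phi n p lam W ` {1..n})"
  unfolding Phi_expand[OF l]
  by (intro span_sum span_scale) (simp add: wv_eq span_base span_scale)

lemma quad_form:
  "(\<Sum>i=1..n. (Phi (p i) \<bullet> h)\<^sup>2) = (\<Sum>k=1..n. lam k * (eigfun Phi n p lam W k \<bullet> h)\<^sup>2)"
proof -
  have "(\<Sum>k=1..n. lam k * (eigfun Phi n p lam W k \<bullet> h)\<^sup>2) = (\<Sum>k=1..n. (wv Phi n p W k \<bullet> h)\<^sup>2)"
  proof (intro sum.cong refl)
    fix k assume k: "k \<in> {1..n}"
    show "lam k * (eigfun Phi n p lam W k \<bullet> h)\<^sup>2 = (wv Phi n p W k \<bullet> h)\<^sup>2"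
      using lam_nonneg[OF k] by (simp add: wv_eq[OF k] power_mult_distrib)
  qed
  also have "\<dots> = (\<Sum>k=1..n. \<Sum>i=1..n. \<Sum>j=1..n. (W i k * W j k) * ((Phi (p i) \<bullet> h) * (Phi (p j) \<bullet> h)))"
    unfolding wv_def inner_sum_left power2_eq_square sum_product by (simp add: mult_ac)
  also have "\<dots> = (\<Sum>i=1..n. \<Sum>j=1..n. (\<Sum>k=1..n. W i k * W j k) * ((Phi (p i) \<bullet> h) * (Phi (p j) \<bullet> h)))"
    unfolding sum_distrib_right by (rule sum3_swap)
  also have "\<dots> = (\<Sum>i=1..n. \<Sum>j=1..n. if i = j then (Phi (p i) \<bullet> h) * (Phi (p j) \<bullet> h) else 0)"
    using ed_rows by (intro sum.cong refl) simp
  also have "\<dots> = (\<Sum>i=1..n. (Phi (p i) \<bullet> h)\<^sup>2)" by (simp add: power2_eq_square)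
  finally show ?thesis by simp
qed

end

lemma emp_op_inner: "u \<bullet> emp_op Phi n p h = (1 / real n) * (\<Sum>i=1..n. (Phi (p i) \<bullet> u) * (Phi (p i) \<bullet> h))"
  unfolding emp_op_def by (simp add: inner_sum_right mult_ac inner_commute)

lemma emp_op_sym: "u \<bullet> emp_op Phi n p h = emp_op Phi n p u \<bullet> h"
proof -
  have "emp_op Phi n p u \<bullet> h = h \<bullet> emp_op Phi n p u" by (rule inner_commute)
  thus ?thesis unfolding emp_op_inner by (simp add: mult.commute)
qed

lemma rearr:
  fixes mu d :: "nat \<Rightarrow> real"
  assumes rm: "r \<le> m" and d01: "\<forall>k\<in>{1..m}. 0 \<le> d k \<and> d k \<le> 1"
    and dsum: "(\<Sum>k=1..m. d k) \<le> real r"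
    and mono: "\<forall>i j. 1 \<le> i \<longrightarrow> i \<le> j \<longrightarrow> j \<le> m \<longrightarrow> mu j \<le> mu i"
    and r1: "1 \<le> r" and mur: "mu r \<ge> 0"
  shows "(\<Sum>k=1..m. mu k * d k) \<le> (\<Sum>k=1..r. mu k)"
proof -
  have split: "(\<Sum>k=1..m. f k) = (\<Sum>k=1..r. f k) + (\<Sum>k=r+1..m. (f k::real))" for f
  proof -
    have "(\<Sum>i=1..r+(m-r). f i) = (\<Sum>i=1..r. f i) + (\<Sum>i=r+1..r+(m-r). f i)"
      by (rule sum.ub_add_nat) (use r1 in simp)
    thus ?thesis using rm by simp
  qed
  have A: "(\<Sum>k=1..r. mu k * (1 - d k)) \<ge> (\<Sum>k=1..r. mu r * (1 - d k))"
    using d01 mono rm by (intro sum_mono mult_right_mono) auto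
  have B: "(\<Sum>k=r+1..m. mu k * d k) \<le> (\<Sum>k=r+1..m. mu r * d k)"
    using d01 mono rm r1 by (intro sum_mono mult_right_mono) auto
  have C: "(\<Sum>k=1..r. mu r * (1 - d k)) = mu r * (real r - (\<Sum>k=1..r. d k))"
    by (simp add: sum_distrib_left[symmetric] sum_subtractf)
  have D: "(\<Sum>k=r+1..m. mu r * d k) = mu r * (\<Sum>k=r+1..m. d k)"
    by (simp add: sum_distrib_left)
  have E: "(\<Sum>k=1..r. mu k * d k) = (\<Sum>k=1..r. mu k) - (\<Sum>k=1..r. mu k * (1 - d k))"
    by (simp add: sum_subtractf right_diff_distrib)
  have G: "real r - (\<Sum>k=1..r. d k) - (\<Sum>k=r+1..m. d k) \<ge> 0"
    using dsum split[of d] by linarith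
  have F: "mu r * (real r - (\<Sum>k=1..r. d k)) - mu r * (\<Sum>k=r+1..m. d k) \<ge> 0"
    using mult_nonneg_nonneg[OF mur G] by (simp add: right_diff_distrib)
  show ?thesis using split[of "\<lambda>k. mu k * d k"] A B C D E F by linarith
qed

lemma ON_subset: "ON e I \<Longrightarrow> J \<subseteq> I \<Longrightarrow> ON e J"
  unfolding ON_def by blast

lemma ON_norm: "ON e I \<Longrightarrow> i \<in> I \<Longrightarrow> norm (e i) = 1"
  unfolding ON_def by (simp add: norm_eq_sqrt_inner)

lemma proj_linear: "linear (proj_op e r)"
proof (rule linearI)
  fix a b show "proj_op e r (a + b) = proj_op e r a + proj_op e r b"
    unfolding proj_op_def by (simp add: inner_add_right scaleR_add_left sum.distrib)
next
  fix c a show "proj_op e r (c *\<^sub>R a) = c *\<^sub>R proj_op e r a"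
    unfolding proj_op_def by (simp add: scaleR_sum_right)
qed

lemma proj_sym: "u \<bullet> proj_op e r h = proj_op e r u \<bullet> h"
  unfolding proj_op_def by (simp add: inner_sum_left inner_sum_right mult.commute inner_commute)

lemma onorm_le_gen:
  assumes "\<And>h. norm (f h) \<le> C * norm h" "C \<ge> 0"
  shows "onorm f \<le> C"
  unfolding onorm_def
proof (rule cSUP_least)
  fix h show "norm (f h) / norm h \<le> C"
  proof (cases "h = 0")
    case True thus ?thesis using assms(2) by simp
  next
    case False thus ?thesis using assms(1)[of h] by (simp add: divide_le_eq)
  qed
qed simp

theorem theorem5:
  fixes \<kappa> :: "'x \<Rightarrow> 'x \<Rightarrow> real"
    and Phi :: "'x \<Rightarrow> 'h::{real_inner, complete_space}"
    and N m r :: nat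
    and x xh :: "nat \<Rightarrow> 'x"
    and lam lamh :: "nat \<Rightarrow> real"
    and V U :: "nat \<Rightarrow> nat \<Rightarrow> real"
  assumes kernel: "\<forall>a b. \<kappa> a b = Phi a \<bullet> Phi b"
    and dense: "closure (span (range Phi)) = UNIV"
    and diag_le1: "\<forall>a. \<kappa> a a \<le> 1"
    and K_pd: "\<forall>c. (\<exists>i\<in>{1..N}. c i \<noteq> 0) \<longrightarrow> (\<Sum>i=1..N. \<Sum>j=1..N. c i * c j * \<kappa> (x i) (x j)) > 0"
    and K_eig: "eigen_decomp N (\<lambda>i j. \<kappa> (x i) (x j)) lam V"
    and lamN_pos: "lam N > 0"
    and sample: "\<forall>i\<in>{1..m}. xh i \<in> x ` {1..N}"
    and Kh_eig: "eigen_decomp m (\<lambda>i j. \<kappa> (xh i) (xh j)) lamh U"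
    and r_ge1: "1 \<le> r" and r_lt_N: "r < N" and r_le_m: "r \<le> m"
    and lamh_r_pos: "lamh r > 0"
    and gap: "(lam r - lam (r + 1)) / real N
                > 3 * hs_norm (eigfun Phi N x lam V) N
                        (\<lambda>h. emp_op Phi N x h - emp_op Phi m xh h)"
  shows "onorm (\<lambda>h. proj_op (eigfun Phi N x lam V) r h - proj_op (eigfun Phi m xh lamh U) r h)
           \<le> 4 * hs_norm (eigfun Phi N x lam V) N (\<lambda>h. emp_op Phi N x h - emp_op Phi m xh h)
             / ((lam r - lam (r + 1)) / real N
                - hs_norm (eigfun Phi N x lam V) N (\<lambda>h. emp_op Phi N x h - emp_op Phi m xh h))
       \<and> 4 * hs_norm (eigfun Phi N x lam V) N (\<lambda>h. emp_op Phi N x h - emp_op Phi m xh h)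
             / ((lam r - lam (r + 1)) / real N
                - hs_norm (eigfun Phi N x lam V) N (\<lambda>h. emp_op Phi N x h - emp_op Phi m xh h))
         \<le> 6 * hs_norm (eigfun Phi N x lam V) N (\<lambda>h. emp_op Phi N x h - emp_op Phi m xh h)
             / ((lam r - lam (r + 1)) / real N)"
proof -
  have ker: "\<And>a b. \<kappa> a b = Phi a \<bullet> Phi b" using kernel by simp
  have edA: "eigen_decomp N (\<lambda>i j. Phi (x i) \<bullet> Phi (x j)) lam V" using K_eig by (simp add: ker)
  have edB: "eigen_decomp m (\<lambda>i j. Phi (xh i) \<bullet> Phi (xh j)) lamh U" using Kh_eig by (simp add: ker)
  define \<phi> where "\<phi> = eigfun Phi N x lam V"
  define \<psi> where "\<psi> = eigfun Phi m xh lamh U"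
  define A where "A = emp_op Phi N x"
  define B where "B = emp_op Phi m xh"
  define E where "E = (\<lambda>h. A h - B h)"
  define \<epsilon> where "\<epsilon> = hs_norm \<phi> N E"
  define \<Delta> where "\<Delta> = (lam r - lam (r + 1)) / real N"
  define P where "P = proj_op \<phi> r"
  define Q where "Q = proj_op \<psi> r"
  have Npos: "real N > 0" using r_lt_N by simp
  have mpos: "real m > 0" using r_le_m r_ge1 by simp
  have lampos: "\<And>k. k \<in> {1..N} \<Longrightarrow> lam k > 0"
    using ed_mono[of N Phi x lam V, OF edA, of _ N] lamN_pos by fastforce
  have ONphi: "ON \<phi> {1..N}"
    using eigfun_ON[of N Phi x lam V, OF edA] lampos unfolding \<phi>_def
    by (metis (no_types, lifting) Collect_cong Collect_mem_eq)
  have ONphir: "ON \<phi> {1..r}" using ON_subset[OF ONphi] r_lt_N by auto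
  have lamhpos: "\<And>k. k \<in> {1..r} \<Longrightarrow> lamh k > 0"
    using ed_mono[of m Phi xh lamh U, OF edB, of _ r] lamh_r_pos r_le_m by fastforce
  define Ip where "Ip = {k\<in>{1..m}. lamh k > 0}"
  have ONpsip: "ON \<psi> Ip" using eigfun_ON[of m Phi xh lamh U, OF edB] unfolding \<psi>_def Ip_def .
  have rIp: "{1..r} \<subseteq> Ip" using lamhpos r_le_m unfolding Ip_def by auto
  have ONpsir: "ON \<psi> {1..r}" using ONpsip rIp by (rule ON_subset)
  have psi0: "\<And>k. k \<in> {1..m} \<Longrightarrow> k \<notin> Ip \<Longrightarrow> \<psi> k = 0"
    unfolding \<psi>_def Ip_def using lam_nonneg[of m Phi xh lamh U, OF edB] eigfun_zero[of m Phi xh lamh U, OF edB]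
    by (metis (mono_tags, lifting) less_eq_real_def mem_Collect_eq)
  have normpsi: "\<And>k. k \<in> {1..m} \<Longrightarrow> norm (\<psi> k) \<le> 1"
    using psi0 ON_norm[OF ONpsip] by (metis norm_zero order_refl zero_le_one)
  have normphi: "\<And>i. i \<in> {1..N} \<Longrightarrow> norm (\<phi> i) = 1" using ON_norm[OF ONphi] .
  have normpsir: "\<And>j. j \<in> {1..r} \<Longrightarrow> norm (\<psi> j) = 1" using ON_norm[OF ONpsir] .
  have quadA: "\<And>h. h \<bullet> A h = (\<Sum>k=1..N. (lam k / real N) * (\<phi> k \<bullet> h)\<^sup>2)"
  proof -
    fix h
    have "h \<bullet> A h = (1 / real N) * (\<Sum>i=1..N. (Phi (x i) \<bullet> h)\<^sup>2)"
      unfolding A_def emp_op_inner by (simp add: power2_eq_square)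
    also have "\<dots> = (\<Sum>k=1..N. (lam k / real N) * (\<phi> k \<bullet> h)\<^sup>2)"
      unfolding quad_form[of N Phi x lam V, OF edA] \<phi>_def by (simp add: sum_distrib_left)
    finally show "h \<bullet> A h = (\<Sum>k=1..N. (lam k / real N) * (\<phi> k \<bullet> h)\<^sup>2)" .
  qed
  have quadB: "\<And>h. h \<bullet> B h = (\<Sum>k=1..m. (lamh k / real m) * (\<psi> k \<bullet> h)\<^sup>2)"
  proof -
    fix h
    have "h \<bullet> B h = (1 / real m) * (\<Sum>i=1..m. (Phi (xh i) \<bullet> h)\<^sup>2)"
      unfolding B_def emp_op_inner by (simp add: power2_eq_square)
    also have "\<dots> = (\<Sum>k=1..m. (lamh k / real m) * (\<psi> k \<bullet> h)\<^sup>2)"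
      unfolding quad_form[of m Phi xh lamh U, OF edB] \<psi>_def by (simp add: sum_distrib_left)
    finally show "h \<bullet> B h = (\<Sum>k=1..m. (lamh k / real m) * (\<psi> k \<bullet> h)\<^sup>2)" .
  qed
  have Esym: "\<And>u v. u \<bullet> E v = E u \<bullet> v"
    unfolding E_def A_def B_def by (simp add: inner_diff_left inner_diff_right emp_op_sym)
  have Phi_span: "\<And>i. i \<in> {1..N} \<Longrightarrow> Phi (x i) \<in> span (\<phi> ` {1..N})"
    unfolding \<phi>_def by (rule Phi_in_span[of N Phi x lam V, OF edA])
  have Phih_span: "\<And>i. i \<in> {1..m} \<Longrightarrow> Phi (xh i) \<in> span (\<phi> ` {1..N})"
    using sample Phi_span by fastforce
  have Espan: "\<And>h. E h \<in> span (\<phi> ` {1..N})"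
    unfolding E_def A_def B_def emp_op_def
    by (intro span_diff span_scale span_sum) (use Phi_span Phih_span in auto)
  have parsE: "\<And>h. (norm (E h))\<^sup>2 = (\<Sum>k=1..N. (\<phi> k \<bullet> E h)\<^sup>2)"
    using ON_parseval[OF ONphi _ Espan] by simp
  have eps_sq: "\<epsilon>\<^sup>2 = (\<Sum>j=1..N. (norm (E (\<phi> j)))\<^sup>2)"
    unfolding \<epsilon>_def hs_norm_def parsE by (simp add: sum_nonneg, rule sum.swap)
  have eps_ge: "\<epsilon> \<ge> 0" unfolding \<epsilon>_def hs_norm_def by (simp add: sum_nonneg)
  define T where "T = (\<Sum>i=1..r. \<Sum>j=1..r. (\<phi> i \<bullet> \<psi> j)\<^sup>2)"
  define s where "s = real r - T"
  have S1: "(\<Sum>i=1..r. (norm (\<phi> i - Q (\<phi> i)))\<^sup>2) = s"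
  proof -
    have "(\<Sum>i=1..r. (norm (\<phi> i - Q (\<phi> i)))\<^sup>2) = (\<Sum>i=1..r. 1 - (\<Sum>j=1..r. (\<phi> i \<bullet> \<psi> j)\<^sup>2))"
    proof (intro sum.cong refl)
      fix i assume i: "i \<in> {1..r}"
      have "(norm (\<phi> i - Q (\<phi> i)))\<^sup>2 = (norm (\<phi> i))\<^sup>2 - (\<Sum>j=1..r. (\<psi> j \<bullet> \<phi> i)\<^sup>2)"
        unfolding Q_def proj_op_def by (rule ON_pyth[OF ONpsir]) simp
      thus "(norm (\<phi> i - Q (\<phi> i)))\<^sup>2 = 1 - (\<Sum>j=1..r. (\<phi> i \<bullet> \<psi> j)\<^sup>2)"
        using normphi[of i] i r_lt_N by (simp add: inner_commute)
    qed
    thus ?thesis unfolding s_def T_def by (simp add: sum_subtractf)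
  qed
  have S2: "(\<Sum>j=1..r. (norm (\<psi> j - P (\<psi> j)))\<^sup>2) = s"
  proof -
    have "(\<Sum>j=1..r. (norm (\<psi> j - P (\<psi> j)))\<^sup>2) = (\<Sum>j=1..r. 1 - (\<Sum>i=1..r. (\<phi> i \<bullet> \<psi> j)\<^sup>2))"
    proof (intro sum.cong refl)
      fix j assume j: "j \<in> {1..r}"
      have "(norm (\<psi> j - P (\<psi> j)))\<^sup>2 = (norm (\<psi> j))\<^sup>2 - (\<Sum>i=1..r. (\<phi> i \<bullet> \<psi> j)\<^sup>2)"
        unfolding P_def proj_op_def by (rule ON_pyth[OF ONphir]) simp
      thus "(norm (\<psi> j - P (\<psi> j)))\<^sup>2 = 1 - (\<Sum>i=1..r. (\<phi> i \<bullet> \<psi> j)\<^sup>2)"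
        using normpsir[OF j] by simp
    qed
    also have "\<dots> = real r - (\<Sum>j=1..r. \<Sum>i=1..r. (\<phi> i \<bullet> \<psi> j)\<^sup>2)" by (simp add: sum_subtractf)
    also have "\<dots> = s" unfolding s_def T_def by (simp, rule sum.swap)
    finally show ?thesis .
  qed
  have s_ge: "s \<ge> 0" using S1[symmetric] by (simp add: sum_nonneg)
  define mu where "mu = (\<lambda>k. lamh k / real m)"
  define \<alpha> where "\<alpha> = (\<lambda>k. lam k / real N)"
  have S3: "(\<Sum>i=1..r. \<phi> i \<bullet> B (\<phi> i)) \<le> (\<Sum>j=1..r. mu j)"
  proof -
    define d where "d = (\<lambda>k. \<Sum>i=1..r. (\<psi> k \<bullet> \<phi> i)\<^sup>2)"
    have "(\<Sum>i=1..r. \<phi> i \<bullet> B (\<phi> i)) = (\<Sum>i=1..r. \<Sum>k=1..m. mu k * (\<psi> k \<bullet> \<phi> i)\<^sup>2)"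
      unfolding quadB mu_def by simp
    also have "\<dots> = (\<Sum>k=1..m. mu k * d k)"
      unfolding d_def sum_distrib_left by (rule sum.swap)
    also have "\<dots> \<le> (\<Sum>j=1..r. mu j)"
    proof (rule rearr[OF r_le_m])
      show "\<forall>k\<in>{1..m}. 0 \<le> d k \<and> d k \<le> 1"
      proof
        fix k assume k: "k \<in> {1..m}"
        have "d k \<le> (norm (\<psi> k))\<^sup>2"
          unfolding d_def using ON_bessel[OF ONphir, of "\<psi> k"] by (simp add: inner_commute)
        also have "\<dots> \<le> 1" using normpsi[OF k] by (simp add: power_le_one)
        finally show "0 \<le> d k \<and> d k \<le> 1" unfolding d_def by (simp add: sum_nonneg)
      qed
      have "(\<Sum>k=1..m. d k) = (\<Sum>i=1..r. \<Sum>k=1..m. (\<psi> k \<bullet> \<phi> i)\<^sup>2)"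
        unfolding d_def by (rule sum.swap)
      also have "\<dots> = (\<Sum>i=1..r. \<Sum>k\<in>Ip. (\<psi> k \<bullet> \<phi> i)\<^sup>2)"
      proof (rule sum.cong[OF refl])
        fix i show "(\<Sum>k=1..m. (\<psi> k \<bullet> \<phi> i)\<^sup>2) = (\<Sum>k\<in>Ip. (\<psi> k \<bullet> \<phi> i)\<^sup>2)"
          by (rule sum.mono_neutral_right) (auto simp: Ip_def psi0)
      qed
      also have "\<dots> \<le> (\<Sum>i=1..r. (norm (\<phi> i))\<^sup>2)"
        by (intro sum_mono ON_bessel[OF ONpsip]) (simp add: Ip_def)
      also have "\<dots> = real r" using normphi r_lt_N by simp
      finally show "(\<Sum>k=1..m. d k) \<le> real r" .
      show "\<forall>i j. 1 \<le> i \<longrightarrow> i \<le> j \<longrightarrow> j \<le> m \<longrightarrow> mu j \<le> mu i"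
        unfolding mu_def using ed_mono[of m Phi xh lamh U, OF edB] mpos
        by (auto intro: divide_right_mono)
      show "1 \<le> r" by (rule r_ge1)
      show "0 \<le> mu r" unfolding mu_def using lamh_r_pos mpos by simp
    qed
    finally show ?thesis .
  qed
  have S4: "\<And>j. j \<in> {1..r} \<Longrightarrow> \<psi> j \<bullet> B (\<psi> j) = mu j"
  proof -
    fix j assume j: "j \<in> {1..r}"
    have jIp: "j \<in> Ip" using j rIp by auto
    have "\<psi> j \<bullet> B (\<psi> j) = (\<Sum>k=1..m. if k = j then mu k else 0)"
      unfolding quadB mu_def
    proof (rule sum.cong[OF refl])
      fix k assume k: "k \<in> {1..m}"
      show "lamh k / real m * (\<psi> k \<bullet> \<psi> j)\<^sup>2 = (if k = j then lamh k / real m else 0)"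
      proof (cases "k \<in> Ip")
        case True thus ?thesis using ONpsip jIp unfolding ON_def by auto
      next
        case False thus ?thesis using psi0[OF k] jIp by auto
      qed
    qed
    also have "\<dots> = mu j" using j r_le_m by simp
    finally show "\<psi> j \<bullet> B (\<psi> j) = mu j" .
  qed
  have S6: "\<And>i. i \<in> {1..N} \<Longrightarrow> \<phi> i \<bullet> A (\<phi> i) = \<alpha> i"
  proof -
    fix i assume i: "i \<in> {1..N}"
    have "\<phi> i \<bullet> A (\<phi> i) = (\<Sum>k=1..N. if k = i then \<alpha> k else 0)"
      unfolding quadA \<alpha>_def
      using ONphi i unfolding ON_def by (intro sum.cong refl) auto
    also have "\<dots> = \<alpha> i" using i by simp
    finally show "\<phi> i \<bullet> A (\<phi> i) = \<alpha> i" .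
  qed
  have Rrow: "\<And>i. i \<in> {1..r} \<Longrightarrow> (\<Sum>j=1..r. (\<phi> i \<bullet> \<psi> j)\<^sup>2) \<le> 1"
  proof -
    fix i assume i: "i \<in> {1..r}"
    have "(\<Sum>j=1..r. (\<psi> j \<bullet> \<phi> i)\<^sup>2) \<le> (norm (\<phi> i))\<^sup>2" by (rule ON_bessel[OF ONpsir]) simp
    thus "(\<Sum>j=1..r. (\<phi> i \<bullet> \<psi> j)\<^sup>2) \<le> 1" using normphi[of i] i r_lt_N by (simp add: inner_commute)
  qed
  have splitN: "\<And>f. (\<Sum>i=1..N. f i) = (\<Sum>i=1..r. f i) + (\<Sum>i=r+1..N. (f i::real))"
  proof -
    fix f :: "nat \<Rightarrow> real"
    have "(\<Sum>i=1..r+(N-r). f i) = (\<Sum>i=1..r. f i) + (\<Sum>i=r+1..r+(N-r). f i)"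
      by (rule sum.ub_add_nat) (use r_ge1 in simp)
    thus "(\<Sum>i=1..N. f i) = (\<Sum>i=1..r. f i) + (\<Sum>i=r+1..N. f i)" using r_lt_N by simp
  qed
  have bnn: "\<alpha> (r+1) \<ge> 0" unfolding \<alpha>_def using lampos[of "r+1"] r_lt_N Npos by simp
  have S5: "(\<Sum>j=1..r. \<psi> j \<bullet> A (\<psi> j)) \<le> (\<Sum>i=1..r. \<alpha> i) - \<Delta> * s"
  proof -
    have hi: "(\<Sum>i=r+1..N. \<alpha> i * (\<phi> i \<bullet> \<psi> j)\<^sup>2) \<le> \<alpha> (r+1) * (1 - (\<Sum>i=1..r. (\<phi> i \<bullet> \<psi> j)\<^sup>2))"
      if j: "j \<in> {1..r}" for j
    proof -
      have "(\<Sum>i=1..N. (\<phi> i \<bullet> \<psi> j)\<^sup>2) \<le> (norm (\<psi> j))\<^sup>2" by (rule ON_bessel[OF ONphi]) simp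
      hence c: "(\<Sum>i=r+1..N. (\<phi> i \<bullet> \<psi> j)\<^sup>2) \<le> 1 - (\<Sum>i=1..r. (\<phi> i \<bullet> \<psi> j)\<^sup>2)"
        using normpsir[OF j] splitN by simp
      have "(\<Sum>i=r+1..N. \<alpha> i * (\<phi> i \<bullet> \<psi> j)\<^sup>2) \<le> (\<Sum>i=r+1..N. \<alpha> (r+1) * (\<phi> i \<bullet> \<psi> j)\<^sup>2)"
        unfolding \<alpha>_def using ed_mono[of N Phi x lam V, OF edA, of "r+1"] Npos
        by (intro sum_mono mult_right_mono) (auto intro: divide_right_mono)
      also have "\<dots> = \<alpha> (r+1) * (\<Sum>i=r+1..N. (\<phi> i \<bullet> \<psi> j)\<^sup>2)" by (simp add: sum_distrib_left)
      also have "\<dots> \<le> \<alpha> (r+1) * (1 - (\<Sum>i=1..r. (\<phi> i \<bullet> \<psi> j)\<^sup>2))"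
        using c bnn by (rule mult_left_mono)
      finally show ?thesis .
    qed
    have lo: "(\<Sum>j=1..r. \<Sum>i=1..r. \<alpha> i * (\<phi> i \<bullet> \<psi> j)\<^sup>2) \<le> (\<Sum>i=1..r. \<alpha> i) - \<alpha> r * s"
    proof -
      have e1: "(\<Sum>j=1..r. \<Sum>i=1..r. \<alpha> i * (\<phi> i \<bullet> \<psi> j)\<^sup>2) = (\<Sum>i=1..r. \<alpha> i * (\<Sum>j=1..r. (\<phi> i \<bullet> \<psi> j)\<^sup>2))"
        by (simp add: sum_distrib_left, rule sum.swap)
      have e2: "(\<Sum>i=1..r. \<alpha> i * (\<Sum>j=1..r. (\<phi> i \<bullet> \<psi> j)\<^sup>2)) = (\<Sum>i=1..r. \<alpha> i) - (\<Sum>i=1..r. \<alpha> i * (1 - (\<Sum>j=1..r. (\<phi> i \<bullet> \<psi> j)\<^sup>2)))"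
        by (simp add: sum_subtractf right_diff_distrib)
      have e3: "(\<Sum>i=1..r. \<alpha> i * (1 - (\<Sum>j=1..r. (\<phi> i \<bullet> \<psi> j)\<^sup>2))) \<ge> (\<Sum>i=1..r. \<alpha> r * (1 - (\<Sum>j=1..r. (\<phi> i \<bullet> \<psi> j)\<^sup>2)))"
        unfolding \<alpha>_def using ed_mono[of N Phi x lam V, OF edA, of _ r] Npos Rrow r_lt_N
        by (intro sum_mono mult_right_mono) (auto intro: divide_right_mono)
      have e4: "(\<Sum>i=1..r. \<alpha> r * (1 - (\<Sum>j=1..r. (\<phi> i \<bullet> \<psi> j)\<^sup>2))) = \<alpha> r * s"
        unfolding s_def T_def by (simp add: sum_distrib_left[symmetric] sum_subtractf)
      show ?thesis using e1 e2 e3 e4 by linarith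
    qed
    have "(\<Sum>j=1..r. \<psi> j \<bullet> A (\<psi> j)) = (\<Sum>j=1..r. \<Sum>i=1..N. \<alpha> i * (\<phi> i \<bullet> \<psi> j)\<^sup>2)"
      unfolding quadA \<alpha>_def by (simp add: inner_commute)
    also have "\<dots> = (\<Sum>j=1..r. \<Sum>i=1..r. \<alpha> i * (\<phi> i \<bullet> \<psi> j)\<^sup>2) + (\<Sum>j=1..r. \<Sum>i=r+1..N. \<alpha> i * (\<phi> i \<bullet> \<psi> j)\<^sup>2)"
      unfolding sum.distrib[symmetric] by (rule sum.cong[OF refl], rule splitN)
    also have "(\<Sum>j=1..r. \<Sum>i=r+1..N. \<alpha> i * (\<phi> i \<bullet> \<psi> j)\<^sup>2) \<le> (\<Sum>j=1..r. \<alpha> (r+1) * (1 - (\<Sum>i=1..r. (\<phi> i \<bullet> \<psi> j)\<^sup>2)))"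
      by (rule sum_mono) (rule hi)
    also have "(\<Sum>j=1..r. \<alpha> (r+1) * (1 - (\<Sum>i=1..r. (\<phi> i \<bullet> \<psi> j)\<^sup>2))) = \<alpha> (r+1) * s"
      unfolding s_def T_def by (simp add: sum_distrib_left[symmetric] sum_subtractf, subst sum.swap, simp)
    finally have "(\<Sum>j=1..r. \<psi> j \<bullet> A (\<psi> j)) \<le> (\<Sum>i=1..r. \<alpha> i) - \<alpha> r * s + \<alpha> (r+1) * s"
      using lo by simp
    moreover have "\<Delta> = \<alpha> r - \<alpha> (r+1)" unfolding \<Delta>_def \<alpha>_def by (simp add: diff_divide_distrib)
    ultimately have "\<Delta> * s = \<alpha> r * s - \<alpha> (r+1) * s" by (simp add: left_diff_distrib)
    thus ?thesis using \<open>(\<Sum>j=1..r. \<psi> j \<bullet> A (\<psi> j)) \<le> (\<Sum>i=1..r. \<alpha> i) - \<alpha> r * s + \<alpha> (r+1) * s\<close> by linarith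
  qed
  have Eswap: "\<And>u v. u \<bullet> E v = v \<bullet> E u" using Esym inner_commute by metis
  have phiE_sq: "(\<Sum>i=1..r. (norm (E (\<phi> i)))\<^sup>2) \<le> \<epsilon>\<^sup>2"
  proof -
    have "(\<Sum>i=1..r. (norm (E (\<phi> i)))\<^sup>2) \<le> (\<Sum>i=1..N. (norm (E (\<phi> i)))\<^sup>2)"
      using r_lt_N by (intro sum_mono2) auto
    thus ?thesis using eps_sq by simp
  qed
  have psiE_sq: "(\<Sum>j=1..r. (norm (E (\<psi> j)))\<^sup>2) \<le> \<epsilon>\<^sup>2"
  proof -
    have "(\<Sum>j=1..r. (norm (E (\<psi> j)))\<^sup>2) = (\<Sum>j=1..r. \<Sum>k=1..N. (\<psi> j \<bullet> E (\<phi> k))\<^sup>2)"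
      unfolding parsE by (intro sum.cong refl) (metis Eswap)
    also have "\<dots> = (\<Sum>k=1..N. \<Sum>j=1..r. (\<psi> j \<bullet> E (\<phi> k))\<^sup>2)" by (rule sum.swap)
    also have "\<dots> \<le> (\<Sum>k=1..N. (norm (E (\<phi> k)))\<^sup>2)"
      by (intro sum_mono ON_bessel[OF ONpsir]) simp
    finally show ?thesis using eps_sq by simp
  qed
  have sqrt_s: "sqrt s ^ 2 = s" using s_ge by simp
  have S7: "(\<Sum>i=1..r. Q (\<phi> i) \<bullet> E (\<phi> i)) = (\<Sum>j=1..r. P (\<psi> j) \<bullet> E (\<psi> j))"
  proof -
    have "(\<Sum>i=1..r. Q (\<phi> i) \<bullet> E (\<phi> i)) = (\<Sum>i=1..r. \<Sum>j=1..r. (\<phi> i \<bullet> \<psi> j) * (\<phi> i \<bullet> E (\<psi> j)))"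
      unfolding Q_def proj_op_def inner_sum_left inner_scaleR_left by (intro sum.cong refl) (metis Eswap inner_commute)
    also have "\<dots> = (\<Sum>j=1..r. \<Sum>i=1..r. (\<phi> i \<bullet> \<psi> j) * (\<phi> i \<bullet> E (\<psi> j)))" by (rule sum.swap)
    also have "\<dots> = (\<Sum>j=1..r. P (\<psi> j) \<bullet> E (\<psi> j))"
      unfolding P_def proj_op_def inner_sum_left inner_scaleR_left by simp
    finally show ?thesis .
  qed
  have X_ge: "\<Delta> * s \<le> (\<Sum>i=1..r. \<phi> i \<bullet> E (\<phi> i)) - (\<Sum>j=1..r. \<psi> j \<bullet> E (\<psi> j))"
  proof -
    have a: "(\<Sum>i=1..r. \<phi> i \<bullet> E (\<phi> i)) = (\<Sum>i=1..r. \<alpha> i) - (\<Sum>i=1..r. \<phi> i \<bullet> B (\<phi> i))"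
      unfolding E_def inner_diff_right sum_subtractf using S6 r_lt_N by simp
    have b: "(\<Sum>j=1..r. \<psi> j \<bullet> E (\<psi> j)) = (\<Sum>j=1..r. \<psi> j \<bullet> A (\<psi> j)) - (\<Sum>j=1..r. mu j)"
      unfolding E_def inner_diff_right sum_subtractf using S4 by simp
    show ?thesis using a b S3 S5 by linarith
  qed
  have X_le: "(\<Sum>i=1..r. \<phi> i \<bullet> E (\<phi> i)) - (\<Sum>j=1..r. \<psi> j \<bullet> E (\<psi> j)) \<le> 2 * \<epsilon> * sqrt s"
  proof -
    have dec: "(\<Sum>i=1..r. \<phi> i \<bullet> E (\<phi> i)) - (\<Sum>j=1..r. \<psi> j \<bullet> E (\<psi> j))
        = (\<Sum>i=1..r. (\<phi> i - Q (\<phi> i)) \<bullet> E (\<phi> i)) - (\<Sum>j=1..r. (\<psi> j - P (\<psi> j)) \<bullet> E (\<psi> j))"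
      using S7 by (simp add: inner_diff_left sum_subtractf)
    have t1: "(\<Sum>i=1..r. (\<phi> i - Q (\<phi> i)) \<bullet> E (\<phi> i)) \<le> sqrt s * \<epsilon>"
    proof -
      have "(\<Sum>i=1..r. (\<phi> i - Q (\<phi> i)) \<bullet> E (\<phi> i)) \<le> (\<Sum>i=1..r. norm (\<phi> i - Q (\<phi> i)) * norm (E (\<phi> i)))"
        by (intro sum_mono) (metis Cauchy_Schwarz_ineq2 abs_le_D1)
      also have "\<dots> \<le> sqrt (\<Sum>i=1..r. (norm (\<phi> i - Q (\<phi> i)))\<^sup>2) * sqrt (\<Sum>i=1..r. (norm (E (\<phi> i)))\<^sup>2)"
        by (rule CS_sqrt)
      also have "\<dots> \<le> sqrt s * \<epsilon>"
        unfolding S1 using phiE_sq eps_ge s_ge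
        by (intro mult_left_mono) (auto intro: real_le_lsqrt)
      finally show ?thesis .
    qed
    have t2: "- (\<Sum>j=1..r. (\<psi> j - P (\<psi> j)) \<bullet> E (\<psi> j)) \<le> sqrt s * \<epsilon>"
    proof -
      have "- (\<Sum>j=1..r. (\<psi> j - P (\<psi> j)) \<bullet> E (\<psi> j)) \<le> (\<Sum>j=1..r. norm (\<psi> j - P (\<psi> j)) * norm (E (\<psi> j)))"
        unfolding sum_negf[symmetric]
        by (intro sum_mono) (metis Cauchy_Schwarz_ineq2 abs_le_D2)
      also have "\<dots> \<le> sqrt (\<Sum>j=1..r. (norm (\<psi> j - P (\<psi> j)))\<^sup>2) * sqrt (\<Sum>j=1..r. (norm (E (\<psi> j)))\<^sup>2)"
        by (rule CS_sqrt)
      also have "\<dots> \<le> sqrt s * \<epsilon>"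
        unfolding S2 using psiE_sq eps_ge s_ge
        by (intro mult_left_mono) (auto intro: real_le_lsqrt)
      finally show ?thesis .
    qed
    have "2 * \<epsilon> * sqrt s = sqrt s * \<epsilon> + sqrt s * \<epsilon>" by simp
    thus ?thesis using dec t1 t2 by linarith
  qed
  have gap': "\<Delta> > 3 * \<epsilon>" using gap unfolding \<Delta>_def \<epsilon>_def E_def A_def B_def \<phi>_def by simp
  have Dpos: "\<Delta> > 0" using gap' eps_ge by linarith
  have key: "sqrt s \<le> 2 * \<epsilon> / \<Delta>"
  proof (cases "s = 0")
    case True thus ?thesis using eps_ge Dpos by simp
  next
    case False
    hence sp: "sqrt s > 0" using s_ge by simp
    have h1: "\<Delta> * s \<le> 2 * \<epsilon> * sqrt s" using X_ge X_le by linarith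
    have "s = sqrt s * sqrt s" using s_ge by simp
    hence "(\<Delta> * sqrt s) * sqrt s \<le> (2 * \<epsilon>) * sqrt s" using h1 by (metis mult.assoc)
    hence "\<Delta> * sqrt s \<le> 2 * \<epsilon>" using sp by (rule mult_right_le_imp_le)
    thus ?thesis using Dpos by (simp add: le_divide_eq mult.commute)
  qed
  have linP: "linear P" unfolding P_def by (rule proj_linear)
  have S10: "norm (P h - Q h) \<le> 2 * sqrt s * norm h" for h
  proof -
    have dec: "P h - Q h = P (h - Q h) - (Q h - P (Q h))" by (simp add: linear_diff[OF linP])
    have n1: "norm (P (h - Q h)) \<le> sqrt s * norm h"
    proof -
      have "P (h - Q h) = (\<Sum>i=1..r. ((\<phi> i - Q (\<phi> i)) \<bullet> h) *\<^sub>R \<phi> i)"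
        unfolding P_def proj_op_def
        by (intro sum.cong refl) (simp add: inner_diff_right inner_diff_left Q_def proj_sym)
      hence "(norm (P (h - Q h)))\<^sup>2 = (\<Sum>i=1..r. ((\<phi> i - Q (\<phi> i)) \<bullet> h)\<^sup>2)"
        using ON_norm_sum[OF ONphir] by simp
      also have "\<dots> \<le> (\<Sum>i=1..r. (norm (\<phi> i - Q (\<phi> i)))\<^sup>2 * (norm h)\<^sup>2)"
      proof (rule sum_mono)
        fix i
        have "\<bar>(\<phi> i - Q (\<phi> i)) \<bullet> h\<bar> \<le> norm (\<phi> i - Q (\<phi> i)) * norm h" by (rule Cauchy_Schwarz_ineq2)
        hence "\<bar>(\<phi> i - Q (\<phi> i)) \<bullet> h\<bar>\<^sup>2 \<le> (norm (\<phi> i - Q (\<phi> i)) * norm h)\<^sup>2"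
          by (rule power_mono) simp
        thus "((\<phi> i - Q (\<phi> i)) \<bullet> h)\<^sup>2 \<le> (norm (\<phi> i - Q (\<phi> i)))\<^sup>2 * (norm h)\<^sup>2"
          by (simp add: power_mult_distrib)
      qed
      also have "\<dots> = s * (norm h)\<^sup>2" unfolding sum_distrib_right[symmetric] S1 ..
      finally have "(norm (P (h - Q h)))\<^sup>2 \<le> s * (norm h)\<^sup>2" .
      hence "norm (P (h - Q h)) \<le> sqrt (s * (norm h)\<^sup>2)" by (rule real_le_rsqrt)
      thus ?thesis by (simp add: real_sqrt_mult)
    qed
    have n2: "norm (Q h - P (Q h)) \<le> sqrt s * norm h"
    proof -
      have "Q h - P (Q h) = (\<Sum>j=1..r. (\<psi> j \<bullet> h) *\<^sub>R (\<psi> j - P (\<psi> j)))"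
        unfolding Q_def proj_op_def linear_sum[OF linP] linear_scale[OF linP]
        by (simp add: scaleR_diff_right sum_subtractf)
      hence "norm (Q h - P (Q h)) \<le> (\<Sum>j=1..r. \<bar>\<psi> j \<bullet> h\<bar> * norm (\<psi> j - P (\<psi> j)))"
        by (metis (no_types, lifting) norm_scaleR norm_sum sum.cong)
      also have "\<dots> \<le> sqrt (\<Sum>j=1..r. \<bar>\<psi> j \<bullet> h\<bar>\<^sup>2) * sqrt (\<Sum>j=1..r. (norm (\<psi> j - P (\<psi> j)))\<^sup>2)"
        by (rule CS_sqrt)
      also have "\<dots> \<le> norm h * sqrt s"
      proof -
        have "(\<Sum>j=1..r. \<bar>\<psi> j \<bullet> h\<bar>\<^sup>2) \<le> (norm h)\<^sup>2" using ON_bessel[OF ONpsir] by simp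
        hence "sqrt (\<Sum>j=1..r. \<bar>\<psi> j \<bullet> h\<bar>\<^sup>2) \<le> norm h" by (simp add: real_sqrt_le_iff real_le_lsqrt)
        thus ?thesis unfolding S2 using s_ge by (intro mult_right_mono) auto
      qed
      finally show ?thesis by (simp add: mult.commute)
    qed
    have "norm (P h - Q h) \<le> norm (P (h - Q h)) + norm (Q h - P (Q h))"
      unfolding dec by (rule norm_triangle_ineq4)
    thus ?thesis using n1 n2 by simp
  qed
  have Dme: "\<Delta> - \<epsilon> > 0" using gap' eps_ge by linarith
  have C1: "2 * sqrt s \<le> 4 * \<epsilon> / (\<Delta> - \<epsilon>)"
  proof -
    have "2 * sqrt s \<le> 4 * \<epsilon> / \<Delta>" using key by simp
    also have "\<dots> \<le> 4 * \<epsilon> / (\<Delta> - \<epsilon>)"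
      using eps_ge Dme Dpos by (intro divide_left_mono) auto
    finally show ?thesis .
  qed
  have res1: "onorm (\<lambda>h. P h - Q h) \<le> 4 * \<epsilon> / (\<Delta> - \<epsilon>)"
  proof (rule onorm_le_gen)
    fix h show "norm (P h - Q h) \<le> 4 * \<epsilon> / (\<Delta> - \<epsilon>) * norm h"
      using S10[of h] C1 by (meson mult_right_mono norm_ge_zero order_trans)
  next
    show "0 \<le> 4 * \<epsilon> / (\<Delta> - \<epsilon>)" using eps_ge Dme by simp
  qed
  have res2: "4 * \<epsilon> / (\<Delta> - \<epsilon>) \<le> 6 * \<epsilon> / \<Delta>"
  proof -
    have "0 \<le> 2 * \<epsilon> * (\<Delta> - 3 * \<epsilon>)" using eps_ge gap' by simp
    hence "4 * \<epsilon> * \<Delta> \<le> 6 * \<epsilon> * (\<Delta> - \<epsilon>)" by (simp add: algebra_simps)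
    thus ?thesis using Dme Dpos by (simp add: field_simps)
  qed
  show ?thesis using res1 res2
    unfolding P_def Q_def \<phi>_def \<psi>_def \<epsilon>_def \<Delta>_def E_def A_def B_def by simp
qed
end
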